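(* Let $\mu_2>\mu_1>-\frac12$. For $\mu\in\{\mu_1,\mu_2\}$ define the normalized generalized Hermite polynomials $\widehat H^{\mu}_n(x)=\frac{\gamma_\mu(n)}{n!\,\lfloor n/2\rfloor!}H^\mu_n(x)$. Then for every $n\ge0$, $$\widehat H^{\mu_2}_n(x)=\sum_{k=0}^{\lfloor n/2\rfloor}\frac{(-1)^k4^k}{k!}(\mu_2-\mu_1)_k\,\widehat H^{\mu_1}_{n-2k}(x).$$ Equivalently, $H^{\mu_2}_n(x)=\sum_{k=0}^{\lfloor n/2\rfloor}C_{n-2k}(n)H^{\mu_1}_{n-2k}(x)$ with $$C_{n-2k}(n)=\frac{(-1)^k}{k!}\frac{n!}{(n-2k)!}\frac{4^k\lfloor n/2\rfloor!}{(\lfloor n/2\rfloor-k)!}\frac{\gamma_{\mu_1}(n-2k)}{\gamma_{\mu_2}(n)}(\mu_2-\mu_1)_k .$$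
   Context: For $\mu\notin\{-\frac12,-\frac32,\dots\}$ and $n=2p+\epsilon$ ($\epsilon\in\{0,1\}$), $\gamma_\mu(n)=2^{2p+\epsilon}p!\,(\mu+\frac12)_{p+\epsilon}$, with $(\alpha)_n=\Gamma(\alpha+n)/\Gamma(\alpha)$; $\exp_\mu(x)=\sum_{n\ge0}x^n/\gamma_\mu(n)$. The generalized Hermite (Szegő–Chihara) polynomials $H^\mu_n$ are defined by $e^{-t^2}\exp_\mu(2xt)=\sum_{n\ge0}H^\mu_n(x)t^n/n!$. *)

theory Defs
  imports "HOL-Analysis.Analysis"
begin

definition gamma_mu :: "real \<Rightarrow> nat \<Rightarrow> real" where
  "gamma_mu mu n = 2 ^ n * fact (n div 2) * pochhammer (mu + 1/2) (n div 2 + n mod 2)"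

definition exp_mu :: "real \<Rightarrow> real \<Rightarrow> real" where
  "exp_mu mu x = (\<Sum>n. x ^ n / gamma_mu mu n)"

definition gen_hermite :: "real \<Rightarrow> nat \<Rightarrow> real \<Rightarrow> real" where
  "gen_hermite mu n x =
     (THE h. \<forall>t::real. (\<lambda>m. h m * t ^ m / fact m) sums (exp (- t\<^sup>2) * exp_mu mu (2 * x * t))) n"

definition gen_hermite_hat :: "real \<Rightarrow> nat \<Rightarrow> real \<Rightarrow> real" where
  "gen_hermite_hat mu n x = gamma_mu mu n / (fact n * fact (n div 2)) * gen_hermite mu n x"

end

theory Submission
  imports Defs
begin


lemma gamma_Suc:
  "gamma_mu mu (Suc n) = gamma_mu mu n * (if even n then real n + 2*mu + 1 else real n + 1)"
proof (cases "even n")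
  case True
  then obtain p where n: "n = 2*p" by blast
  have "Suc n div 2 = p" "Suc n mod 2 = 1" "n div 2 = p" "n mod 2 = 0" using n by auto
  then show ?thesis using n unfolding gamma_mu_def
    by (simp add: pochhammer_rec' algebra_simps)
next
  case False
  then obtain p where n: "n = 2*p+1" using oddE by blast
  have "Suc n div 2 = Suc p" "Suc n mod 2 = 0" "n div 2 = p" "n mod 2 = 1" using n by auto
  then show ?thesis using n unfolding gamma_mu_def
    by (simp add: algebra_simps)
qed

lemma gamma_bound:
  assumes "mu > -1/2"
  shows "gamma_mu mu n \<ge> (min 1 (2*mu+1)) ^ n * fact n"
proof (induction n)
  case 0 then show ?case by (simp add: gamma_mu_def)
next
  case (Suc n)
  define c where "c = min 1 (2*mu+1)"
  have c: "0 < c" "c \<le> 1" "c \<le> 2*mu+1" using assms by (auto simp: c_def)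
  have r: "(if even n then real n + 2*mu + 1 else real n + 1) \<ge> c * (real n + 1)"
    using c mult_right_mono[OF c(2), of "real n"] by (auto simp: algebra_simps)
  have IH: "c^n * fact n \<le> gamma_mu mu n" using Suc by (simp add: c_def)
  have "0 \<le> c^n * fact n" using c by simp
  then have g0: "0 \<le> gamma_mu mu n" using IH by linarith
  have "c ^ Suc n * fact (Suc n) = (c^n * fact n) * (c * (real n + 1))"
    by (simp add: algebra_simps)
  also have "\<dots> \<le> gamma_mu mu n * (if even n then real n + 2*mu + 1 else real n + 1)"
    using IH g0 c r by (intro mult_mono) auto
  finally show ?case by (simp add: gamma_Suc c_def)
qed

lemma gamma_pos: "mu > -1/2 \<Longrightarrow> gamma_mu mu n > 0"
  by (rule less_le_trans[OF _ gamma_bound]) auto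

lemma exp_mu_abs_summable:
  assumes "mu > -1/2"
  shows "summable (\<lambda>n. norm (z ^ n / gamma_mu mu n))"
proof -
  define c where "c = min 1 (2*mu+1)"
  have c: "0 < c" using assms by (auto simp: c_def)
  show ?thesis
  proof (rule summable_comparison_test)
    show "summable (\<lambda>n. inverse (fact n) * (norm z / c) ^ n)" by (rule summable_exp)
    show "\<exists>N. \<forall>n\<ge>N. norm (norm (z ^ n / gamma_mu mu n)) \<le> inverse (fact n) * (norm z / c) ^ n"
    proof (intro exI allI impI)
      fix n :: nat
      have g: "gamma_mu mu n \<ge> c^n * fact n" using gamma_bound[OF assms] by (simp add: c_def)
      have gp: "c^n * fact n > 0" using c by simp
      have "norm (norm (z ^ n / gamma_mu mu n)) = norm z ^ n / gamma_mu mu n"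
        using gamma_pos[OF assms, of n] by (simp add: norm_power power_abs)
      also have "\<dots> \<le> norm z ^ n / (c^n * fact n)"
        using g gp by (intro divide_left_mono) auto
      also have "\<dots> = inverse (fact n) * (norm z / c) ^ n"
        by (simp add: power_divide field_simps)
      finally show "norm (norm (z ^ n / gamma_mu mu n)) \<le> inverse (fact n) * (norm z / c) ^ n" .
    qed
  qed
qed



lemma powser_unique0:
  fixes a :: "nat \<Rightarrow> real"
  assumes S: "\<And>t. (\<lambda>n. a n * t^n) sums 0"
  shows "a m = 0"
proof (induction m rule: less_induct)
  case (less m)
  have sm: "(\<lambda>i. a (i+m) * t^i) sums 0" if t: "t \<noteq> 0" "norm t < 1" for t :: real
  proof -
    have "(\<lambda>i. a (i+m) * t^(i+m)) sums 0"
      using sums_zero_iff_shift[of m "\<lambda>n. a n * t^n" 0] S less.IH by simp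
    then have "(\<lambda>i. inverse (t^m) * (a (i+m) * t^(i+m))) sums (inverse (t^m) * 0)"
      by (rule sums_mult)
    moreover have "\<And>i. inverse (t^m) * (a (i+m) * t^(i+m)) = a (i+m) * t^i"
      using t by (simp add: power_add)
    ultimately show ?thesis by simp
  qed
  have "((\<lambda>t::real. 0::real) \<longlongrightarrow> a (0+m)) (at 0)"
    using powser_limit_0_strong[where s=1 and a="\<lambda>i. a (i+m)" and f="\<lambda>_. 0::real"] sm by simp
  then have "(0::real) = a (0+m)" by (rule LIM_const_eq)
  then show ?case by simp
qed



definition hcoef :: "real \<Rightarrow> real \<Rightarrow> nat \<Rightarrow> real" where
 "hcoef mu x n = fact n * (\<Sum>i\<le>n. (if even i then (-1)^(i div 2) / fact (i div 2) else 0)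
     * ((2*x)^(n-i) / gamma_mu mu (n-i)))"

lemma hcoef_sums:
  assumes mu: "mu > -1/2"
  shows "(\<lambda>m. hcoef mu x m * t^m / fact m) sums (exp (- t\<^sup>2) * exp_mu mu (2 * x * t))"
proof -
  define c where "c i = (if even i then (-1)^(i div 2) / fact (i div 2) else (0::real))" for i
  define A where "A i = c i * t^i" for i
  define B where "B j = (2*x*t)^j / gamma_mu mu j" for j
  have A_eq: "A = (\<lambda>n. if even n then (\<lambda>k. (- (t\<^sup>2))^k /\<^sub>R fact k) (n div 2) else (\<lambda>_. 0) ((n - 1) div 2))"
  proof
    fix n show "A n = (if even n then (\<lambda>k. (- (t\<^sup>2))^k /\<^sub>R fact k) (n div 2) else (\<lambda>_. 0) ((n - 1) div 2))"
    proof (cases "even n")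
      case True then obtain k where n: "n = 2*k" by blast
      show ?thesis unfolding n A_def c_def
        by (simp add: power_mult power_minus[of "t\<^sup>2"] divide_inverse)
    qed (simp add: A_def c_def)
  qed
  have "A sums (0 + exp (- (t\<^sup>2)))"
    unfolding A_eq by (rule sums_if[OF sums_zero exp_converges])
  then have A_sums: "A sums exp (- t\<^sup>2)" by simp
  have nA_eq: "(\<lambda>n. norm (A n)) = (\<lambda>n. if even n then (\<lambda>k. (t\<^sup>2)^k /\<^sub>R fact k) (n div 2) else (\<lambda>_. 0) ((n - 1) div 2))"
  proof
    fix n show "norm (A n) = (if even n then (\<lambda>k. (t\<^sup>2)^k /\<^sub>R fact k) (n div 2) else (\<lambda>_. 0) ((n - 1) div 2))"
    proof (cases "even n")
      case True then obtain k where n: "n = 2*k" by blast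
      show ?thesis unfolding n A_def c_def
        by (simp add: power_mult divide_inverse abs_mult power_abs)
    qed (simp add: A_def c_def)
  qed
  have "(\<lambda>n. norm (A n)) sums (0 + exp (t\<^sup>2))"
    unfolding nA_eq by (rule sums_if[OF sums_zero exp_converges])
  then have A_abs: "summable (\<lambda>n. norm (A n))" by (rule sums_summable)
  have B_abs: "summable (\<lambda>n. norm (B n))"
    unfolding B_def by (rule exp_mu_abs_summable[OF mu])
  have "(\<lambda>k. \<Sum>i\<le>k. A i * B (k - i)) sums ((\<Sum>k. A k) * (\<Sum>k. B k))"
    by (rule Cauchy_product_sums[OF A_abs B_abs])
  moreover have "(\<Sum>k. A k) = exp (- t\<^sup>2)" using A_sums by (rule sums_unique[symmetric])
  moreover have "(\<Sum>k. B k) = exp_mu mu (2 * x * t)" by (simp add: B_def exp_mu_def)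
  moreover have "(\<Sum>i\<le>k. A i * B (k - i)) = hcoef mu x k * t^k / fact k" for k
  proof -
    have "(\<Sum>i\<le>k. A i * B (k - i)) = (\<Sum>i\<le>k. (c i * ((2*x)^(k-i) / gamma_mu mu (k-i))) * t^k)"
    proof (rule sum.cong[OF refl])
      fix i assume "i \<in> {..k}"
      then have "t^k = t^i * t^(k-i)" by (simp add: power_add[symmetric])
      then show "A i * B (k - i) = (c i * ((2*x)^(k-i) / gamma_mu mu (k-i))) * t^k"
        by (simp add: A_def B_def power_mult_distrib)
    qed
    also have "\<dots> = hcoef mu x k * t^k / fact k"
      by (simp add: hcoef_def c_def sum_distrib_right)
    finally show ?thesis .
  qed
  ultimately show ?thesis by simp
qed

lemma gen_hermite_hcoef:
  assumes mu: "mu > -1/2"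
  shows "gen_hermite mu n x = hcoef mu x n"
proof -
  let ?P = "\<lambda>h. \<forall>t::real. (\<lambda>m. h m * t ^ m / fact m) sums (exp (- t\<^sup>2) * exp_mu mu (2 * x * t))"
  have "(THE h. ?P h) = hcoef mu x"
  proof (rule the_equality)
    show "?P (hcoef mu x)" using hcoef_sums[OF mu] by blast
  next
    fix h assume h: "?P h"
    show "h = hcoef mu x"
    proof
      fix m
      have "(\<lambda>m. ((h m - hcoef mu x m) / fact m) * t^m) sums 0" for t :: real
      proof -
        have "(\<lambda>m. h m * t ^ m / fact m - hcoef mu x m * t^m / fact m) sums
          (exp (- t\<^sup>2) * exp_mu mu (2 * x * t) - exp (- t\<^sup>2) * exp_mu mu (2 * x * t))"
          by (rule sums_diff[OF h[rule_format] hcoef_sums[OF mu]])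
        then show ?thesis by (simp add: diff_divide_distrib left_diff_distrib)
      qed
      then have "(h m - hcoef mu x m) / fact m = 0" by (rule powser_unique0)
      then show "h m = hcoef mu x m" by simp
    qed
  qed
  then show ?thesis unfolding gen_hermite_def by simp
qed

lemma sum_even_reindex:
  fixes f :: "nat \<Rightarrow> real"
  shows "(\<Sum>i\<le>n. if even i then f i else 0) = (\<Sum>k\<le>n div 2. f (2*k))"
proof -
  have "(\<Sum>i\<le>n. if even i then f i else 0) = sum f {i\<in>{..n}. even i}"
    by (subst sum.inter_filter) auto
  also have "{i\<in>{..n}. even i} = (\<lambda>k. 2*k) ` {..n div 2}"
    by (auto elim!: evenE)
  also have "sum f \<dots> = (\<Sum>k\<le>n div 2. f (2*k))"
    by (subst sum.reindex) (auto simp: inj_on_def)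
  finally show ?thesis .
qed

lemma gen_hermite_explicit:
  assumes mu: "mu > -1/2"
  shows "gen_hermite mu n x = fact n * (\<Sum>k\<le>n div 2. (-1)^k / fact k * ((2*x)^(n-2*k) / gamma_mu mu (n-2*k)))"
proof -
  have "gen_hermite mu n x = fact n * (\<Sum>i\<le>n. if even i then (-1)^(i div 2) / fact (i div 2) * ((2*x)^(n-i) / gamma_mu mu (n-i)) else 0)"
    unfolding gen_hermite_hcoef[OF mu] hcoef_def by (intro arg_cong2[where f="(*)"] sum.cong) auto
  also have "\<dots> = fact n * (\<Sum>k\<le>n div 2. (-1)^k / fact k * ((2*x)^(n-2*k) / gamma_mu mu (n-2*k)))"
    by (subst sum_even_reindex) simp
  finally show ?thesis .
qed



lemma gamma_ratio:
  assumes k: "k \<le> n div 2"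
  shows "gamma_mu mu n = gamma_mu mu (n-2*k) * 4^k * (fact (n div 2) / fact (n div 2 - k))
           * pochhammer (mu + 1/2 + real (n mod 2) + real (n div 2 - k)) k"
proof -
  define p where "p = n div 2"
  define e where "e = n mod 2"
  have n: "n = 2*p + e" by (simp add: p_def e_def)
  have kp: "k \<le> p" using k by (simp add: p_def)
  have e2: "e < 2" by (simp add: e_def)
  have nk: "n-2*k = 2*(p-k)+e" using kp n by simp
  have d: "(n-2*k) div 2 = p - k" "(n-2*k) mod 2 = e" unfolding nk using e2 by auto
  have P: "pochhammer (mu+1/2) (p+e) = pochhammer (mu+1/2) (p-k+e) * pochhammer (mu + 1/2 + real (p-k+e)) k"
    using pochhammer_product[of "p-k+e" "p+e" "mu+1/2"] kp by simp
  have pw: "(2::real)^n = 2^(n-2*k) * 4^k"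
  proof -
    have "n = (n - 2*k) + 2*k" using kp n by simp
    then have "(2::real)^n = 2^(n-2*k) * 2^(2*k)" by (metis power_add)
    then show ?thesis by (simp add: power_mult)
  qed
  have f: "fact p = fact (p-k) * (fact p / fact (p-k) :: real)" by simp
  show ?thesis
    unfolding gamma_mu_def d
    apply (simp only: p_def[symmetric] e_def[symmetric] P pw)
    apply (subst f)
    apply (simp add: algebra_simps)
    done
qed

definition Qs :: "real \<Rightarrow> real \<Rightarrow> nat \<Rightarrow> real" where
 "Qs z c p = (\<Sum>m\<le>p. (-4)^(p-m) / (fact (p-m) * fact m) * pochhammer (c + real m) (p-m) * z^m)"

lemma hat_Q:
  assumes mu: "mu > -1/2"
  shows "gen_hermite_hat mu n x = (2*x)^(n mod 2) * Qs ((2*x)^2) (mu + 1/2 + real (n mod 2)) (n div 2)"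
proof -
  define p where "p = n div 2"
  define e where "e = n mod 2"
  define y where "y = 2*x"
  define c where "c = mu + 1/2 + real e"
  have n: "n = 2*p + e" by (simp add: p_def e_def)
  have "gen_hermite_hat mu n x = (\<Sum>k\<le>p. gamma_mu mu n / fact p * ((-1)^k / fact k * (y^(n-2*k) / gamma_mu mu (n-2*k))))"
    unfolding gen_hermite_hat_def gen_hermite_explicit[OF mu] sum_distrib_left
    by (intro sum.cong) (auto simp: p_def y_def)
  also have "\<dots> = (\<Sum>k\<le>p. y^e * ((-4)^k / (fact k * fact (p-k)) * pochhammer (c + real (p-k)) k * (y^2)^(p-k)))"
  proof (rule sum.cong[OF refl])
    fix k assume "k \<in> {..p}"
    then have kp: "k \<le> p" by simp
    have g: "gamma_mu mu n = gamma_mu mu (n-2*k) * 4^k * (fact p / fact (p - k)) * pochhammer (c + real (p-k)) k"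
      using gamma_ratio[of k n mu] kp by (simp add: p_def e_def c_def add.assoc)
    have gp: "gamma_mu mu (n-2*k) > 0" by (rule gamma_pos[OF mu])
    have yy: "y^(n-2*k) = y^e * (y^2)^(p-k)"
    proof -
      have "n - 2*k = e + 2*(p-k)" using kp n by simp
      then show ?thesis by (simp add: power_add power_mult)
    qed
    have m4: "(-4::real)^k = (-1)^k * 4^k" by (simp add: power_mult_distrib[symmetric])
    show "gamma_mu mu n / fact p * ((-1)^k / fact k * (y^(n-2*k) / gamma_mu mu (n-2*k)))
        = y^e * ((-4)^k / (fact k * fact (p-k)) * pochhammer (c + real (p-k)) k * (y^2)^(p-k))"
      unfolding g yy m4 using gp by (simp add: field_simps)
  qed
  also have "\<dots> = y^e * (\<Sum>k\<le>p. (-4)^k / (fact k * fact (p-k)) * pochhammer (c + real (p-k)) k * (y^2)^(p-k))"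
    by (simp add: sum_distrib_left)
  also have "(\<Sum>k\<le>p. (-4)^k / (fact k * fact (p-k)) * pochhammer (c + real (p-k)) k * (y^2)^(p-k))
      = Qs (y^2) c p"
    unfolding Qs_def atLeast0AtMost[symmetric]
    by (subst sum.atLeastAtMost_rev) (intro sum.cong, auto simp: mult.commute)
  finally show ?thesis by (simp add: p_def e_def y_def c_def)
qed

lemma aux_filter:
  fixes f :: "nat \<Rightarrow> real"
  shows "(\<Sum>m\<le>p. if m \<le> p - j then f m else 0) = (\<Sum>m\<le>p-j. f m)"
proof -
  have "(\<Sum>m\<le>p. if m \<le> p - j then f m else 0) = sum f {m\<in>{..p}. m \<le> p - j}"
    by (subst sum.inter_filter) auto
  also have "{m\<in>{..p}. m \<le> p - j} = {..p-j}" by auto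
  finally show ?thesis .
qed

lemma sum_triangle_swap:
  fixes f :: "nat \<Rightarrow> nat \<Rightarrow> real"
  shows "(\<Sum>j\<le>p. \<Sum>m\<le>p-j. f j m) = (\<Sum>m\<le>p. \<Sum>j\<le>p-m. f j m)"
proof -
  have "(\<Sum>j\<le>p. \<Sum>m\<le>p-j. f j m) = (\<Sum>j\<le>p. \<Sum>m\<le>p. if j + m \<le> p then f j m else 0)"
  proof (rule sum.cong[OF refl])
    fix j assume "j \<in> {..p}"
    then have "(\<Sum>m\<le>p. if j + m \<le> p then f j m else 0) = (\<Sum>m\<le>p. if m \<le> p - j then f j m else 0)"
      by (intro sum.cong) auto
    then show "(\<Sum>m\<le>p-j. f j m) = (\<Sum>m\<le>p. if j + m \<le> p then f j m else 0)"
      using aux_filter[of p j "f j"] by simp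
  qed
  also have "\<dots> = (\<Sum>m\<le>p. \<Sum>j\<le>p. if j + m \<le> p then f j m else 0)"
    by (rule sum.swap)
  also have "\<dots> = (\<Sum>m\<le>p. \<Sum>j\<le>p-m. f j m)"
  proof (rule sum.cong[OF refl])
    fix m assume "m \<in> {..p}"
    then have "(\<Sum>j\<le>p. if j + m \<le> p then f j m else 0) = (\<Sum>j\<le>p. if j \<le> p - m then f j m else 0)"
      by (intro sum.cong) auto
    then show "(\<Sum>j\<le>p. if j + m \<le> p then f j m else 0) = (\<Sum>j\<le>p-m. f j m)"
      using aux_filter[of p m "\<lambda>j. f j m"] by simp
  qed
  finally show ?thesis .
qed

lemma Q_conv:
  "Qs z (c+d) p = (\<Sum>j\<le>p. (-4)^j / fact j * pochhammer d j * Qs z c (p-j))"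
proof -
  define F where "F j m = (-4)^j / fact j * pochhammer d j *
      ((-4)^(p-j-m) / (fact (p-j-m) * fact m) * pochhammer (c + real m) (p-j-m) * z^m)" for j m
  have "(\<Sum>j\<le>p. (-4)^j / fact j * pochhammer d j * Qs z c (p-j)) = (\<Sum>j\<le>p. \<Sum>m\<le>p-j. F j m)"
    unfolding Qs_def F_def by (simp add: sum_distrib_left)
  also have "\<dots> = (\<Sum>m\<le>p. \<Sum>j\<le>p-m. F j m)" by (rule sum_triangle_swap)
  also have "\<dots> = (\<Sum>m\<le>p. (-4)^(p-m) / (fact (p-m) * fact m) * pochhammer (c + d + real m) (p-m) * z^m)"
  proof (rule sum.cong[OF refl])
    fix m assume "m \<in> {..p}"
    define N where "N = p - m"
    have "(\<Sum>j\<le>N. F j m) = (\<Sum>j\<le>N. ((-4)^N * z^m / (fact N * fact m)) *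
            (of_nat (N choose j) * pochhammer d j * pochhammer (c + real m) (N - j)))"
    proof (rule sum.cong[OF refl])
      fix j assume "j \<in> {..N}"
      then have jN: "j \<le> N" by simp
      have e1: "p - j - m = N - j" by (simp add: N_def)
      have e2: "(-4::real)^N = (-4)^j * (-4)^(N-j)" using jN by (simp add: power_add[symmetric])
      show "F j m = ((-4)^N * z^m / (fact N * fact m)) *
            (of_nat (N choose j) * pochhammer d j * pochhammer (c + real m) (N - j))"
        unfolding F_def e1 e2 binomial_fact[OF jN] by (simp add: field_simps)
    qed
    also have "\<dots> = ((-4)^N * z^m / (fact N * fact m)) * pochhammer (d + (c + real m)) N"
      by (simp add: pochhammer_binomial_sum sum_distrib_left)
    finally show "(\<Sum>j\<le>p-m. F j m) = (-4)^(p-m) / (fact (p-m) * fact m) * pochhammer (c + d + real m) (p-m) * z^m"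
      by (simp add: N_def algebra_simps)
  qed
  also have "\<dots> = Qs z (c+d) p" by (simp add: Qs_def)
  finally show ?thesis ..
qed



theorem mainTheorem14:
  fixes mu1 mu2 x :: real and n :: nat
  assumes "mu1 > - 1/2" and "mu2 > mu1"
  shows "gen_hermite_hat mu2 n x =
           (\<Sum>k = 0..n div 2. (-1) ^ k * 4 ^ k / fact k * pochhammer (mu2 - mu1) k
                              * gen_hermite_hat mu1 (n - 2 * k) x)
       \<and> gen_hermite mu2 n x =
           (\<Sum>k = 0..n div 2.
              ((-1) ^ k / fact k * (fact n / fact (n - 2 * k))
               * (4 ^ k * fact (n div 2) / fact (n div 2 - k))
               * (gamma_mu mu1 (n - 2 * k) / gamma_mu mu2 n)
               * pochhammer (mu2 - mu1) k) * gen_hermite mu1 (n - 2 * k) x)"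
proof -
  have m1: "mu1 > -1/2" and m2: "mu2 > -1/2" using assms by auto
  define p where "p = n div 2"
  define e where "e = n mod 2"
  define y where "y = 2*x"
  define c where "c = mu1 + 1/2 + real e"
  define d where "d = mu2 - mu1"
  have n: "n = 2*p + e" by (simp add: p_def e_def)
  have e2: "e < 2" by (simp add: e_def)
  have dm: "(n-2*k) div 2 = p - k" "(n-2*k) mod 2 = e" if "k \<le> p" for k
  proof -
    have nk: "n-2*k = 2*(p-k)+e" using that n by simp
    show "(n-2*k) div 2 = p - k" "(n-2*k) mod 2 = e" unfolding nk using e2 by auto
  qed
  have H1: "gen_hermite_hat mu2 n x =
           (\<Sum>k = 0..n div 2. (-1) ^ k * 4 ^ k / fact k * pochhammer (mu2 - mu1) k
                              * gen_hermite_hat mu1 (n - 2 * k) x)"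
  proof -
    have "gen_hermite_hat mu2 n x = y^e * Qs (y^2) (c + d) p"
    proof -
      have cd: "c + d = mu2 + 1/2 + real e" by (simp add: c_def d_def)
      show ?thesis unfolding cd y_def p_def e_def by (rule hat_Q[OF m2])
    qed
    also have "\<dots> = y^e * (\<Sum>j\<le>p. (-4)^j / fact j * pochhammer d j * Qs (y^2) c (p-j))"
      by (simp only: Q_conv)
    also have "\<dots> = (\<Sum>k = 0..n div 2. (-1) ^ k * 4 ^ k / fact k * pochhammer (mu2 - mu1) k
                              * gen_hermite_hat mu1 (n - 2 * k) x)"
      unfolding sum_distrib_left atLeast0AtMost p_def[symmetric]
    proof (rule sum.cong[OF refl])
      fix k assume "k \<in> {..p}"
      then have kp: "k \<le> p" by simp
      have "gen_hermite_hat mu1 (n - 2 * k) x = y^e * Qs (y^2) c (p-k)"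
        using hat_Q[OF m1, of "n-2*k" x] dm[OF kp] by (simp add: y_def c_def)
      moreover have "(-4::real)^k = (-1)^k * 4^k" by (simp add: power_mult_distrib[symmetric])
      ultimately show "y ^ e * ((- 4) ^ k / fact k * pochhammer d k * Qs (y\<^sup>2) c (p - k)) =
          (- 1) ^ k * 4 ^ k / fact k * pochhammer (mu2 - mu1) k * gen_hermite_hat mu1 (n - 2 * k) x"
        by (simp add: d_def)
    qed
    finally show ?thesis .
  qed
  have g2: "gamma_mu mu2 n > 0" by (rule gamma_pos[OF m2])
  have inv: "gen_hermite mu n x = fact n * fact (n div 2) / gamma_mu mu n * gen_hermite_hat mu n x"
    if "mu > -1/2" for mu n
    using gamma_pos[OF that, of n] by (simp add: gen_hermite_hat_def field_simps)
  have H2: "gen_hermite mu2 n x =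
           (\<Sum>k = 0..n div 2.
              ((-1) ^ k / fact k * (fact n / fact (n - 2 * k))
               * (4 ^ k * fact (n div 2) / fact (n div 2 - k))
               * (gamma_mu mu1 (n - 2 * k) / gamma_mu mu2 n)
               * pochhammer (mu2 - mu1) k) * gen_hermite mu1 (n - 2 * k) x)"
    unfolding inv[OF m2] H1 sum_distrib_left atLeast0AtMost p_def[symmetric]
  proof (rule sum.cong[OF refl])
    fix k assume "k \<in> {..p}"
    then have kp: "k \<le> p" by simp
    have g1: "gamma_mu mu1 (n-2*k) > 0" by (rule gamma_pos[OF m1])
    show "fact n * fact p / gamma_mu mu2 n *
         ((- 1) ^ k * 4 ^ k / fact k * pochhammer (mu2 - mu1) k * gen_hermite_hat mu1 (n - 2 * k) x) =
         (- 1) ^ k / fact k * (fact n / fact (n - 2 * k)) * (4 ^ k * fact p / fact (p - k)) *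
         (gamma_mu mu1 (n - 2 * k) / gamma_mu mu2 n) * pochhammer (mu2 - mu1) k *
         gen_hermite mu1 (n - 2 * k) x"
      unfolding gen_hermite_hat_def dm(1)[OF kp] using g1 g2 by (simp add: field_simps)
  qed
  show ?thesis using H1 H2 by blast
qed

end
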